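(* Assume Assumptions 1, 2, 3 (stated in the context). For any fixed $\epsilon_5>0$, if Line-Search (Algorithm 3, described in the context), called with input point $\theta$, makes infinitely many calls to subdivision, then either $\hat{\mathcal{P}}(\epsilon_5)$ (evaluated at $\theta$) is unbounded or $\theta$ is unsafe.
   Context: Problem: for $\theta$ and $t\in[0,T]$, body $i$ occupies $b_i(t,\theta)\subset\mathbb{R}^3$, obstacles occupy $o$; $\text{dist}$ is the shortest Euclidean distance between sets; $d_0\ge0$; $\mathcal{O}(\theta)$ twice differentiable cost. Assumption 1: finite decompositions $b_i=\bigcup_j b_{ij}$, $o=\bigcup_k o_k$ with each $(t,\theta)\mapsto\text{dist}(b_{ij}(t,\theta),o_k)$ sufficiently smooth. Assumption 2: the feasible domain of $t,\theta$ is bounded. Assumption 3: $\mathcal{P}$ sufficiently smooth, monotonically decreasing on $(0,\infty)$, $\lim_{x\to0}\mathcal{P}=\infty$, $\lim_{x\to\infty}\mathcal{P}=0$, $\lim_{x\to0}x\mathcal{P}(x)=\infty$. $L_1$: a constant with $|\text{dist}(b_{ij}(t_1,\theta),o_k)-\text{dist}(b_{ij}(t_2,\theta),o_k)|\le L_1|t_1-t_2|$ for all arguments. $\mathcal{P}_{ijk}(t,\theta)=\mathcal{P}(\text{dist}(b_{ij}(t,\theta),o_k)-d_0)$; per triple a finite partition of $[0,T]$ into intervals $[T_0^l,T_1^l]$; subdividing $(i,j,k,l)$ replaces the interval by its two halves; $\mathcal{P}_{ijkl}(\theta)=\mathcal{P}_{ijk}((T_0^l+T_1^l)/2,\theta)$;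 $\mathcal{E}=\mathcal{O}+\mu\sum_{ijkl}(T_1^l-T_0^l)\mathcal{P}_{ijkl}$, $\mu>0$. The hybrid penalty $\hat{\mathcal{P}}(\epsilon_5)$ is $\sum_{ijkl}$ of $(T_1^l-T_0^l)\mathcal{P}_{ijkl}$ over intervals with $T_1^l-T_0^l\ge\epsilon_5$ and of $\int_{T_0^l}^{T_1^l}\mathcal{P}_{ijk}(t,\theta)dt$ over intervals with $T_1^l-T_0^l<\epsilon_5$. Directions $d^{(1)}=-\nabla_\theta\mathcal{E}$ or $d^{(2)}=\mathcal{M}(\nabla^2_\theta\mathcal{E})^{-1}d^{(1)}$ with $\underline\beta I\preceq\mathcal{M}(H)\preceq\bar\beta I$. Wolfe: $\mathcal{E}(\theta+d\alpha)\le\mathcal{E}(\theta)+c\langle d\alpha,\nabla\mathcal{E}\rangle$, $c\in(0,1)$. Safety check at $\theta$: $\psi(x)=L_1x/2+L_2x^\eta$ ($L_2,\eta>0$); return a tuple $(i,j,k,l)$ with $\text{dist}(b_{ij}((T_0^l+T_1^l)/2,\theta),o_k)\le d_0+\psi(T_1^l-T_0^l)$ if one exists, else None ($\theta$ safe; otherwise unsafe). Line-Search$(\theta,d,\epsilon_\alpha)$ ($\alpha_0>0,\gamma\in(0,1)$): $\alpha=\alpha_0$; while $\theta+d\alpha$ fails the safety check or Wolfe: if the check returned $(i,j,k,l)$, then if $\alpha\le\epsilon_\alpha$: $\epsilon_\alpha\leftarrow\gamma\epsilon_\alpha$, subdivide $(i,j,k,l)$, re-evaluate $\mathcal{E}$,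 recompute $d$; else $\alpha\leftarrow\gamma\alpha$; if only Wolfe fails, $\alpha\leftarrow\gamma\alpha$. Return $\alpha,\epsilon_\alpha$. *)

theory Defs
  imports "HOL-Analysis.Analysis" "HOL-Library.Infinite_Set"
begin

definition twice_diff :: "('a::real_normed_vector \<Rightarrow> real) \<Rightarrow> bool" where
  "twice_diff f \<longleftrightarrow> (\<exists>f' f''.
     (\<forall>x. (f has_derivative blinfun_apply (f' x)) (at x)) \<and>
     (\<forall>x. (f' has_derivative blinfun_apply (f'' x)) (at x)))"

definition C2 :: "('a::real_normed_vector \<Rightarrow> real) \<Rightarrow> bool" where
  "C2 f \<longleftrightarrow> (\<exists>f' f''.
     (\<forall>x. (f has_derivative blinfun_apply (f' x)) (at x)) \<and>
     (\<forall>x. (f' has_derivative blinfun_apply (f'' x)) (at x)) \<and>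
     continuous_on UNIV f'')"

definition C2_pos :: "(real \<Rightarrow> real) \<Rightarrow> bool" where
  "C2_pos P \<longleftrightarrow> (\<exists>P' P''.
     (\<forall>x>0. (P has_real_derivative P' x) (at x)) \<and>
     (\<forall>x>0. (P' has_real_derivative P'' x) (at x)) \<and>
     continuous_on {0<..} P'')"

definition grad :: "(real^'n::finite \<Rightarrow> real) \<Rightarrow> real^'n \<Rightarrow> real^'n" where
  "grad f x = (SOME g. GDERIV f x :> g)"

definition hess :: "(real^'n::finite \<Rightarrow> real) \<Rightarrow> real^'n \<Rightarrow> real^'n^'n" where
  "hess f x = (SOME H. (grad f has_derivative (\<lambda>h. H *v h)) (at x))"

definition is_partition :: "real \<Rightarrow> (real \<times> real) set \<Rightarrow> bool" where
  "is_partition T S \<longleftrightarrow> finite S \<and> (\<forall>(a,b)\<in>S. a < b) \<and>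
     (\<Union>(a,b)\<in>S. {a..b}) = {0..T} \<and>
     (\<forall>(a,b)\<in>S. \<forall>(a',b')\<in>S. (a,b) \<noteq> (a',b') \<longrightarrow> {a<..<b} \<inter> {a'<..<b'} = {})"

(* A partition state assigns to every triple c = ((i,j),k) a set of intervals *)
type_synonym 'c partn = "'c \<Rightarrow> (real \<times> real) set"

definition energy ::
  "(real^'n::finite \<Rightarrow> real) \<Rightarrow> real \<Rightarrow> (real \<Rightarrow> real) \<Rightarrow> ('c::finite \<Rightarrow> real \<Rightarrow> real^'n \<Rightarrow> real)
   \<Rightarrow> real \<Rightarrow> 'c partn \<Rightarrow> real^'n \<Rightarrow> real" where
  "energy Obj mu P D d0 prt x = Obj x + mu * (\<Sum>c\<in>UNIV. \<Sum>(a,b)\<in>prt c. (b - a) * P (D c ((a + b) / 2) x - d0))"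

definition hybrid_pen ::
  "real \<Rightarrow> (real \<Rightarrow> real) \<Rightarrow> ('c::finite \<Rightarrow> real \<Rightarrow> 'p \<Rightarrow> real) \<Rightarrow> real \<Rightarrow> 'c partn \<Rightarrow> 'p \<Rightarrow> real" where
  "hybrid_pen eps5 P D d0 prt x = (\<Sum>c\<in>UNIV. \<Sum>(a,b)\<in>prt c.
      if eps5 \<le> b - a then (b - a) * P (D c ((a + b) / 2) x - d0)
      else integral {a..b} (\<lambda>t. P (D c t x - d0)))"

(* the safety check can return tuple (c,(a,b)) at x *)
definition unsafe_tuple ::
  "(real \<Rightarrow> real) \<Rightarrow> ('c \<Rightarrow> real \<Rightarrow> 'p \<Rightarrow> real) \<Rightarrow> real \<Rightarrow> 'c partn \<Rightarrow> 'p \<Rightarrow> 'c \<Rightarrow> real \<times> real \<Rightarrow> bool" where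
  "unsafe_tuple psi D d0 prt x c ab \<longleftrightarrow> ab \<in> prt c \<and>
     D c ((fst ab + snd ab) / 2) x \<le> d0 + psi (snd ab - fst ab)"

definition unsafe ::
  "(real \<Rightarrow> real) \<Rightarrow> ('c \<Rightarrow> real \<Rightarrow> 'p \<Rightarrow> real) \<Rightarrow> real \<Rightarrow> 'c partn \<Rightarrow> 'p \<Rightarrow> bool" where
  "unsafe psi D d0 prt x \<longleftrightarrow> (\<exists>c ab. unsafe_tuple psi D d0 prt x c ab)"

definition subdivide :: "'c partn \<Rightarrow> 'c \<Rightarrow> real \<times> real \<Rightarrow> 'c partn" where
  "subdivide prt c ab = prt(c := (prt c - {ab}) \<union>
      {(fst ab, (fst ab + snd ab) / 2), ((fst ab + snd ab) / 2, snd ab)})"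

definition wolfe :: "(real^'n::finite \<Rightarrow> real) \<Rightarrow> real \<Rightarrow> real^'n \<Rightarrow> real^'n \<Rightarrow> real \<Rightarrow> bool" where
  "wolfe E cW x d \<alpha> \<longleftrightarrow> E (x + \<alpha> *\<^sub>R d) \<le> E x + cW * ((\<alpha> *\<^sub>R d) \<bullet> grad E x)"

definition direction :: "bool \<Rightarrow> (real^'n^'n \<Rightarrow> real^'n^'n) \<Rightarrow> (real^'n::finite \<Rightarrow> real) \<Rightarrow> real^'n \<Rightarrow> real^'n" where
  "direction newton M E x =
     (if newton then matrix_inv (M (hess E x)) *v (- grad E x) else - grad E x)"

(* One iteration of the while loop of Line-Search(x, d, eps_alpha).
   State: (partition, alpha, eps_alpha, d).  The flag sub records whether this
   iteration called subdivision. *)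
definition ls_step ::
  "(real^'n::finite \<Rightarrow> real) \<Rightarrow> real \<Rightarrow> (real \<Rightarrow> real) \<Rightarrow> ('c::finite \<Rightarrow> real \<Rightarrow> real^'n \<Rightarrow> real) \<Rightarrow> real
   \<Rightarrow> (real \<Rightarrow> real) \<Rightarrow> real \<Rightarrow> real \<Rightarrow> bool \<Rightarrow> (real^'n^'n \<Rightarrow> real^'n^'n) \<Rightarrow> real^'n
   \<Rightarrow> 'c partn \<times> real \<times> real \<times> (real^'n) \<Rightarrow> bool \<Rightarrow> 'c partn \<times> real \<times> real \<times> (real^'n) \<Rightarrow> bool" where
  "ls_step Obj mu P D d0 psi \<gamma> cW newton M x st sub st' \<longleftrightarrow>
    (let prt = fst st; \<alpha> = fst (snd st); e\<alpha> = fst (snd (snd st)); d = snd (snd (snd st));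
         prt' = fst st'; \<alpha>' = fst (snd st'); e\<alpha>' = fst (snd (snd st')); d' = snd (snd (snd st'))
     in (\<exists>c ab. unsafe_tuple psi D d0 prt (x + \<alpha> *\<^sub>R d) c ab \<and>
         (if \<alpha> \<le> e\<alpha> then
            sub \<and> prt' = subdivide prt c ab \<and> e\<alpha>' = \<gamma> * e\<alpha> \<and> \<alpha>' = \<alpha> \<and>
            d' = direction newton M (energy Obj mu P D d0 prt') x
          else \<not> sub \<and> prt' = prt \<and> \<alpha>' = \<gamma> * \<alpha> \<and> e\<alpha>' = e\<alpha> \<and> d' = d))
      \<or> (\<not> unsafe psi D d0 prt (x + \<alpha> *\<^sub>R d) \<and>
         \<not> wolfe (energy Obj mu P D d0 prt) cW x d \<alpha> \<and>
         \<not> sub \<and> prt' = prt \<and> \<alpha>' = \<gamma> * \<alpha> \<and> e\<alpha>' = e\<alpha> \<and> d' = d))"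

end

theory Submission
  imports Defs
begin

lemma margin_mono:
  fixes f :: "real \<Rightarrow> real"
  assumes L1: "\<forall>t1 t2. t1 \<in> {0..T} \<longrightarrow> t2 \<in> {0..T} \<longrightarrow> \<bar>f t1 - f t2\<bar> \<le> L1 * \<bar>t1 - t2\<bar>"
    and L1p: "L1 \<ge> 0" and L2p: "L2 \<ge> 0" and eta: "\<eta> > 0"
    and J: "0 \<le> a" "b \<le> T" and I: "a \<le> a'" "a' < b'" "b' \<le> b"
  shows "f ((a' + b')/2) - d0 - (L1 * (b' - a') / 2 + L2 * (b' - a') powr \<eta>)
       \<ge> f ((a + b)/2) - d0 - (L1 * (b - a) / 2 + L2 * (b - a) powr \<eta>)"
proof -
  have "\<bar>f ((a' + b')/2) - f ((a + b)/2)\<bar> \<le> L1 * \<bar>(a' + b')/2 - (a + b)/2\<bar>"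
    using L1 J I by auto
  also have "\<dots> \<le> L1 * (((b - a) - (b' - a')) / 2)"
    using L1p I by (intro mult_left_mono) (auto simp: abs_if field_simps)
  finally have 1: "f ((a' + b')/2) \<ge> f ((a + b)/2) - L1 * (((b - a) - (b' - a')) / 2)" by linarith
  have "(b' - a') powr \<eta> \<le> (b - a) powr \<eta>"
    using I eta by (intro powr_mono2) auto
  then have "L2 * (b' - a') powr \<eta> \<le> L2 * (b - a) powr \<eta>" using L2p by (rule mult_left_mono)
  then show ?thesis using 1 by (simp add: algebra_simps add_divide_distrib diff_divide_distrib)
qed

lemma inv_bound:
  fixes A :: "real^'n::finite^'n"
  assumes bl: "bl > 0" and pd: "\<forall>v. bl * (v \<bullet> v) \<le> v \<bullet> (A *v v)"
  shows "norm (matrix_inv A *v u) \<le> norm u / bl"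
proof -
  have "\<forall>x. A *v x = 0 \<longrightarrow> x = 0"
  proof (intro allI impI)
    fix x assume "A *v x = 0"
    then have "bl * (x \<bullet> x) \<le> 0" using pd[rule_format, of x] by simp
    then have "x \<bullet> x \<le> 0" using bl by (simp add: mult_le_0_iff)
    then show "x = 0" by (metis inner_eq_zero_iff order_antisym inner_ge_zero)
  qed
  then have "\<exists>B. B ** A = mat 1" by (simp add: matrix_left_invertible_ker)
  then have inv: "invertible A" by (simp add: invertible_left_inverse)
  then have "A ** matrix_inv A = mat 1 \<and> matrix_inv A ** A = mat 1"
    unfolding matrix_inv_def invertible_def by (rule someI_ex)
  then have Aw: "A *v (matrix_inv A *v u) = u"
    by (simp add: matrix_vector_mul_assoc)
  define w where "w = matrix_inv A *v u"
  have "bl * (norm w)^2 \<le> w \<bullet> u" using pd[rule_format, of w] Aw unfolding w_def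
    by (simp add: power2_norm_eq_inner)
  also have "\<dots> \<le> norm w * norm u" by (rule norm_cauchy_schwarz)
  finally have "bl * (norm w)^2 \<le> norm w * norm u" .
  then have "bl * norm w \<le> norm u"
    by (cases "norm w = 0") (auto simp: power2_eq_square mult.assoc[symmetric])
  then show ?thesis unfolding w_def[symmetric] using bl by (simp add: field_simps)
qed

lemma grad_bound:
  fixes f :: "real^'n::finite \<Rightarrow> real"
  assumes d: "(f has_derivative f') (at x)" and b: "\<forall>h. \<bar>f' h\<bar> \<le> K * norm h" and K: "K \<ge> 0"
  shows "norm (grad f x) \<le> K"
proof -
  have lin: "linear f'" using d by (simp add: has_derivative_linear)
  define g where "g = (\<Sum>b\<in>Basis. f' b *\<^sub>R b)"
  have "f' h = h \<bullet> g" for h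
  proof -
    have "f' h = f' (\<Sum>b\<in>Basis. (h \<bullet> b) *\<^sub>R b)" by (simp add: euclidean_representation)
    also have "\<dots> = (\<Sum>b\<in>Basis. (h \<bullet> b) * f' b)" using lin
      by (simp add: linear_sum linear_scale)
    also have "\<dots> = h \<bullet> g" unfolding g_def by (simp add: inner_sum_right mult.commute)
    finally show ?thesis .
  qed
  then have "f' = (\<lambda>h. h \<bullet> g)" by auto
  then have "GDERIV f x :> g" unfolding gderiv_def using d by simp
  then have G: "GDERIV f x :> grad f x" unfolding grad_def by (rule someI)
  have "f' = (\<lambda>h. h \<bullet> grad f x)" using has_derivative_unique[OF d G[unfolded gderiv_def]] .
  then have "grad f x \<bullet> grad f x \<le> K * norm (grad f x)" using b[rule_format, of "grad f x"] by auto
  then have "norm (grad f x) * norm (grad f x) \<le> K * norm (grad f x)"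
    by (simp add: power2_norm_eq_inner[symmetric] power2_eq_square)
  then show ?thesis by (cases "grad f x = 0") (auto simp: mult_le_cancel_right K)
qed

definition inv_part :: "('c \<Rightarrow> (real \<times> real) set) \<Rightarrow> ('c \<Rightarrow> (real \<times> real) set) \<Rightarrow> bool" where
 "inv_part p0 Q \<longleftrightarrow> (\<forall>c. finite (Q c) \<and>
    (\<Sum>ab\<in>Q c. snd ab - fst ab) \<le> (\<Sum>ab\<in>p0 c. snd ab - fst ab) \<and>
    (\<forall>ab\<in>Q c. fst ab < snd ab \<and> (\<exists>J\<in>p0 c. fst J \<le> fst ab \<and> snd ab \<le> snd J)))"

lemma inv_part_init:
  assumes "\<forall>c. is_partition T (p0 c)"
  shows "inv_part p0 p0"
  using assms unfolding inv_part_def is_partition_def by fastforce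

lemma inv_part_sub:
  assumes I: "inv_part p0 Q" and ab: "ab \<in> Q c"
  shows "inv_part p0 (subdivide Q c ab)"
proof -
  obtain a b where abe: "ab = (a, b)" by (cases ab)
  define m where "m = (a + b) / 2"
  have fin: "finite (Q c)" and ablt: "a < b"
    and J: "\<exists>J\<in>p0 c. fst J \<le> a \<and> b \<le> snd J"
    and S: "(\<Sum>ab\<in>Q c. snd ab - fst ab) \<le> (\<Sum>ab\<in>p0 c. snd ab - fst ab)"
    and all: "\<forall>ab\<in>Q c. fst ab < snd ab \<and> (\<exists>J\<in>p0 c. fst J \<le> fst ab \<and> snd ab \<le> snd J)"
    using I ab abe unfolding inv_part_def by (metis fst_conv snd_conv)+
  have am: "a < m" "m < b" using ablt unfolding m_def by auto
  define N where "N = (Q c - {ab}) \<union> {(a, m), (m, b)}"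
  have sN: "subdivide Q c ab = Q(c := N)" unfolding subdivide_def N_def m_def abe by simp
  have finN: "finite N" unfolding N_def using fin by simp
  let ?f = "\<lambda>ab::real\<times>real. snd ab - fst ab"
  have nn: "\<forall>x\<in>N. ?f x \<ge> 0" unfolding N_def using all am by force
  have "sum ?f N = sum ?f (Q c - {ab}) + sum ?f {(a, m), (m, b)} - sum ?f ((Q c - {ab}) \<inter> {(a, m), (m, b)})"
    unfolding N_def using fin by (subst sum_Un) auto
  also have "sum ?f ((Q c - {ab}) \<inter> {(a, m), (m, b)}) \<ge> 0"
    using nn unfolding N_def by (intro sum_nonneg) auto
  moreover have "sum ?f {(a, m), (m, b)} = b - a" using am by simp
  moreover have "sum ?f (Q c - {ab}) = sum ?f (Q c) - (b - a)"
    using fin ab abe by (simp add: sum_diff1)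
  ultimately have "sum ?f N \<le> sum ?f (Q c)" by linarith
  then have SN: "sum ?f N \<le> sum ?f (p0 c)" using S by linarith
  have allN: "\<forall>ab\<in>N. fst ab < snd ab \<and> (\<exists>J\<in>p0 c. fst J \<le> fst ab \<and> snd ab \<le> snd J)"
    unfolding N_def using all am J by force
  show ?thesis using I finN SN allN unfolding sN inv_part_def by auto
qed

lemma pos_min:
  assumes "finite A" "\<forall>x\<in>A. 0 < (f x::real)"
  shows "\<exists>m>0. \<forall>x\<in>A. m \<le> f x"
proof -
  define m where "m = Min (insert 1 (f ` A))"
  have "m > 0" unfolding m_def using assms by (subst Min_gr_iff) auto
  moreover have "\<forall>x\<in>A. m \<le> f x" unfolding m_def using assms by (auto intro: Min_le)
  ultimately show ?thesis by blast
qed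

theorem lemma7:
  fixes B :: "'b::finite \<Rightarrow> real \<Rightarrow> real^'n::finite \<Rightarrow> (real^3) set"
    and Ob :: "'o::finite \<Rightarrow> (real^3) set"
    and T d0 L1 L2 \<eta> mu \<alpha>0 \<gamma> cW \<beta>l \<beta>u \<epsilon>5 e\<alpha>0 :: real
    and Obj :: "real^'n \<Rightarrow> real"
    and P :: "real \<Rightarrow> real"
    and M :: "real^'n^'n \<Rightarrow> real^'n^'n"
    and newton :: bool
    and \<Theta> :: "(real^'n) set"
    and \<theta> d_in :: "real^'n"
    and part0 :: "('b \<times> 'o) partn"
    and s :: "nat \<Rightarrow> ('b \<times> 'o) partn \<times> real \<times> real \<times> (real^'n)"
    and sub :: "nat \<Rightarrow> bool"
  defines "D \<equiv> (\<lambda>c t x. setdist (B (fst c) t x) (Ob (snd c)))"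
    and "\<psi> \<equiv> (\<lambda>x. L1 * x / 2 + L2 * x powr \<eta>)"
  assumes A1: "\<forall>c. C2 (\<lambda>(t, x). D c t x)"
    and A2: "bounded \<Theta>" "\<theta> \<in> \<Theta>"
      "\<forall>n. \<theta> + fst (snd (s n)) *\<^sub>R snd (snd (snd (s n))) \<in> \<Theta>"
    and A3: "C2_pos P" "\<forall>x y. 0 < x \<longrightarrow> x \<le> y \<longrightarrow> P y \<le> P x"
      "filterlim P at_top (at_right 0)" "(P \<longlongrightarrow> 0) at_top"
      "filterlim (\<lambda>x. x * P x) at_top (at_right 0)"
    and Obj: "twice_diff Obj"
    and T: "T > 0" and d0: "d0 \<ge> 0"
    and L1: "\<forall>c t1 t2 x. t1 \<in> {0..T} \<longrightarrow> t2 \<in> {0..T} \<longrightarrow> \<bar>D c t1 x - D c t2 x\<bar> \<le> L1 * \<bar>t1 - t2\<bar>"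
    and L2: "L2 > 0" and \<eta>: "\<eta> > 0"
    and mu: "mu > 0" and \<alpha>0: "\<alpha>0 > 0" and \<gamma>: "0 < \<gamma>" "\<gamma> < 1"
    and cW: "0 < cW" "cW < 1"
    and \<beta>: "0 < \<beta>l" "\<beta>l \<le> \<beta>u"
    and M: "\<forall>H. transpose (M H) = M H"
      "\<forall>H v. \<beta>l * (v \<bullet> v) \<le> v \<bullet> (M H *v v) \<and> v \<bullet> (M H *v v) \<le> \<beta>u * (v \<bullet> v)"
    and \<epsilon>5: "\<epsilon>5 > 0" and e\<alpha>0: "e\<alpha>0 > 0"
    and part0: "\<forall>c. is_partition T (part0 c)"
    and run0: "s 0 = (part0, \<alpha>0, e\<alpha>0, d_in)"
    and run: "\<forall>n. ls_step Obj mu P D d0 \<psi> \<gamma> cW newton M \<theta> (s n) (sub n) (s (Suc n))"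
    and inf_sub: "\<exists>\<^sub>\<infinity>n. sub n"
  shows "\<not> bdd_above (range (\<lambda>n. hybrid_pen \<epsilon>5 P D d0 (fst (s n)) \<theta>))
         \<or> unsafe \<psi> D d0 part0 \<theta>"
proof (rule disjI2, rule ccontr)
  assume safe: "\<not> unsafe \<psi> D d0 part0 \<theta>"
  have psi: "\<And>x. \<psi> x = L1 * x / 2 + L2 * x powr \<eta>" using assms(2) by simp
  have L1p: "L1 \<ge> 0"
  proof -
    have "\<bar>D undefined 0 \<theta> - D undefined T \<theta>\<bar> \<le> L1 * \<bar>0 - T\<bar>" using spec[OF spec[OF spec[OF spec[OF L1, of undefined], of 0], of T], of \<theta>] T by auto
    then have "0 \<le> L1 * T" using T by auto
    then show ?thesis using T by (simp add: zero_le_mult_iff)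
  qed
  have psi_nn: "\<And>x. x \<ge> 0 \<Longrightarrow> \<psi> x \<ge> 0" using L1p L2 by (simp add: psi)
  have p0T: "\<forall>c. \<forall>J\<in>part0 c. 0 \<le> fst J \<and> fst J < snd J \<and> snd J \<le> T"
  proof (intro allI ballI)
    fix c J assume J: "J \<in> part0 c"
    have ipc: "is_partition T (part0 c)" by (rule spec[OF part0])
    have ip1: "\<forall>(a,b)\<in>part0 c. a < b" using ipc unfolding is_partition_def by simp
    have ip2: "(\<Union>(a,b)\<in>part0 c. {a..b}) = {0..T}" using ipc unfolding is_partition_def by simp
    have "fst J < snd J" using ip1 J by (auto simp: case_prod_beta)
    moreover have "{fst J..snd J} \<subseteq> (\<Union>(a,b)\<in>part0 c. {a..b})"
      using UN_upper[OF J, of "\<lambda>(a,b). {a..b}"] by (simp add: case_prod_beta)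
    then have "{fst J..snd J} \<subseteq> {0..T}" using ip2 by simp
    ultimately show "0 \<le> fst J \<and> fst J < snd J \<and> snd J \<le> T" by auto
  qed
  define mg where "mg = (\<lambda>c J. D c ((fst J + snd J) / 2) \<theta> - d0 - \<psi> (snd J - fst J))"
  have pm: "\<forall>c. \<forall>J\<in>part0 c. 0 < mg c J"
  proof (intro allI ballI)
    fix c J assume J: "J \<in> part0 c"
    have "\<not> unsafe_tuple \<psi> D d0 part0 \<theta> c J" using safe unfolding unsafe_def by blast
    then show "0 < mg c J" using J unfolding unsafe_tuple_def mg_def by linarith
  qed
  have "\<forall>c. \<exists>m>0. \<forall>J\<in>part0 c. m \<le> mg c J"
  proof
    fix c show "\<exists>m>0. \<forall>J\<in>part0 c. m \<le> mg c J"
      using pos_min[of "part0 c" "mg c"] part0 pm unfolding is_partition_def by auto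
  qed
  then obtain mc where mc: "\<forall>c. mc c > 0 \<and> (\<forall>J\<in>part0 c. mc c \<le> mg c J)" by metis
  define m0 where "m0 = Min (range mc)"
  have m0: "m0 > 0" unfolding m0_def using mc by (subst Min_gr_iff) auto
  have m0le: "\<forall>c. \<forall>J\<in>part0 c. m0 \<le> mg c J"
  proof (intro allI ballI)
    fix c J assume J: "J \<in> part0 c"
    have "m0 \<le> mc c" unfolding m0_def by (simp add: Min_le)
    moreover have "mc c \<le> mg c J" using spec[OF mc, of c] J by blast
    ultimately show "m0 \<le> mg c J" by linarith
  qed
  have marg: "\<forall>Q c ab. inv_part part0 Q \<longrightarrow> ab \<in> Q c \<longrightarrow>
      m0 \<le> mg c ab \<and> (fst ab + snd ab) / 2 \<in> {0..T} \<and> fst ab < snd ab"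
  proof (intro allI impI)
    fix Q c ab assume Q: "inv_part part0 Q" and ab: "ab \<in> Q c"
    obtain J where J: "J \<in> part0 c" "fst J \<le> fst ab" "snd ab \<le> snd J" and lt: "fst ab < snd ab"
      using Q ab unfolding inv_part_def by blast
    have JT: "0 \<le> fst J" "snd J \<le> T" using p0T[rule_format, OF J(1)] by auto
    have "mg c J \<le> mg c ab"
      unfolding mg_def psi
      using margin_mono[of T "\<lambda>t. D c t \<theta>" L1 L2 \<eta> "fst J" "snd J" "fst ab" "snd ab" d0]
        spec[OF L1, of c] L1p L2 \<eta> JT J lt by auto
    then show "m0 \<le> mg c ab \<and> (fst ab + snd ab) / 2 \<in> {0..T} \<and> fst ab < snd ab"
      using m0le[rule_format, OF J(1)] J JT lt by auto
  qed
  have "\<forall>c. \<exists>r>0. \<forall>t x. t \<in> {0..T} \<longrightarrow> dist x \<theta> < r \<longrightarrow> \<bar>D c t x - D c t \<theta>\<bar> < m0"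
  proof
    fix c
    obtain f' f'' where f': "\<forall>z. ((\<lambda>(t, x). D c t x) has_derivative blinfun_apply (f' z)) (at z)"
      using A1 unfolding C2_def by blast
    have "continuous_on UNIV (\<lambda>(t, x). D c t x)"
      by (rule has_derivative_continuous_on) (use f' in auto)
    then have "continuous_on ({0..T} \<times> cball \<theta> 1) (\<lambda>(t, x). D c t x)"
      by (rule continuous_on_subset) auto
    then have "uniformly_continuous_on ({0..T} \<times> cball \<theta> 1) (\<lambda>(t, x). D c t x)"
      by (intro compact_uniformly_continuous compact_Times) auto
    then obtain d where d: "d > 0" and dd: "\<forall>z\<in>{0..T} \<times> cball \<theta> 1. \<forall>z'\<in>{0..T} \<times> cball \<theta> 1.
        dist z' z < d \<longrightarrow> dist ((\<lambda>(t, x). D c t x) z') ((\<lambda>(t, x). D c t x) z) < m0"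
      unfolding uniformly_continuous_on_def using m0 by blast
    show "\<exists>r>0. \<forall>t x. t \<in> {0..T} \<longrightarrow> dist x \<theta> < r \<longrightarrow> \<bar>D c t x - D c t \<theta>\<bar> < m0"
    proof (intro exI[of _ "min d 1"] conjI allI impI)
      fix t x assume t: "t \<in> {0..T}" and x: "dist x \<theta> < min d 1"
      have "dist (t, x) (t, \<theta>) < d" using x by (simp add: dist_Pair_Pair)
      moreover have "(t, x) \<in> {0..T} \<times> cball \<theta> 1" "(t, \<theta>) \<in> {0..T} \<times> cball \<theta> 1"
        using t x by (auto simp: dist_commute)
      ultimately have "dist (D c t x) (D c t \<theta>) < m0" using dd by fastforce
      then show "\<bar>D c t x - D c t \<theta>\<bar> < m0" by (simp add: dist_real_def)
    qed (use d in auto)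
  qed
  then obtain rc where rc: "\<forall>c. rc c > 0 \<and> (\<forall>t x. t \<in> {0..T} \<longrightarrow> dist x \<theta> < rc c \<longrightarrow> \<bar>D c t x - D c t \<theta>\<bar> < m0)"
    by metis
  define \<rho> where "\<rho> = Min (range rc)"
  have \<rho>: "\<rho> > 0" unfolding \<rho>_def using rc by (subst Min_gr_iff) auto
  have \<rho>le: "\<And>c. \<rho> \<le> rc c" unfolding \<rho>_def by (simp add: Min_le)
  have nounsafe: "\<forall>Q x c ab. inv_part part0 Q \<longrightarrow> dist x \<theta> < \<rho> \<longrightarrow> \<not> unsafe_tuple \<psi> D d0 Q x c ab"
  proof (intro allI impI notI)
    fix Q x c ab assume Q: "inv_part part0 Q" and x: "dist x \<theta> < \<rho>" and u: "unsafe_tuple \<psi> D d0 Q x c ab"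
    have ab: "ab \<in> Q c" and le: "D c ((fst ab + snd ab) / 2) x \<le> d0 + \<psi> (snd ab - fst ab)"
      using u unfolding unsafe_tuple_def by auto
    have mm: "m0 \<le> mg c ab" and mid: "(fst ab + snd ab) / 2 \<in> {0..T}" using marg[rule_format, OF Q ab] by auto
    have "\<bar>D c ((fst ab + snd ab) / 2) x - D c ((fst ab + snd ab) / 2) \<theta>\<bar> < m0"
      using spec[OF rc, of c] mid x \<rho>le[of c] by auto
    then show False using mm le unfolding mg_def by linarith
  qed
  have "\<forall>c. \<exists>F. (\<forall>z. ((\<lambda>(t, x). D c t x) has_derivative blinfun_apply (F z)) (at z)) \<and> continuous_on UNIV F"
  proof
    fix c
    obtain f' f'' where f': "\<forall>z. ((\<lambda>(t, x). D c t x) has_derivative blinfun_apply (f' z)) (at z)"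
      and f'': "\<forall>z. (f' has_derivative blinfun_apply (f'' z)) (at z)"
      using A1 unfolding C2_def by blast
    have "continuous_on UNIV f'"
      by (rule has_derivative_continuous_on) (use f'' in auto)
    then show "\<exists>F. (\<forall>z. ((\<lambda>(t, x). D c t x) has_derivative blinfun_apply (F z)) (at z)) \<and> continuous_on UNIV F"
      using f' by blast
  qed
  then have "\<exists>Fd. \<forall>c. (\<forall>z. ((\<lambda>(t, x). D c t x) has_derivative blinfun_apply (Fd c z)) (at z)) \<and> continuous_on UNIV (Fd c)"
    by (rule choice)
  then obtain Fd where Fd0: "\<forall>c. (\<forall>z. ((\<lambda>(t, x). D c t x) has_derivative blinfun_apply (Fd c z)) (at z)) \<and> continuous_on UNIV (Fd c)"
    by blast
  have Fd: "\<And>c z. ((\<lambda>(t, x). D c t x) has_derivative blinfun_apply (Fd c z)) (at z)"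
    using Fd0 by blast
  have Fdc: "\<And>c. continuous_on UNIV (Fd c)" using Fd0 by blast
  have "\<forall>c. \<exists>B. \<forall>t\<in>{0..T}. norm (Fd c (t, \<theta>)) \<le> B"
  proof
    fix c
    have "continuous_on {0..T} (\<lambda>t. Fd c (t, \<theta>))"
      by (rule continuous_on_compose2[OF Fdc[of c]]) (auto intro!: continuous_intros)
    then have "compact ((\<lambda>t. Fd c (t, \<theta>)) ` {0..T})" by (intro compact_continuous_image) auto
    then have "bounded ((\<lambda>t. Fd c (t, \<theta>)) ` {0..T})" by (rule compact_imp_bounded)
    then obtain B where "\<forall>y\<in>(\<lambda>t. Fd c (t, \<theta>)) ` {0..T}. norm y \<le> B" unfolding bounded_iff by blast
    then show "\<exists>B. \<forall>t\<in>{0..T}. norm (Fd c (t, \<theta>)) \<le> B" by auto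
  qed
  then have "\<exists>Bc. \<forall>c. \<forall>t\<in>{0..T}. norm (Fd c (t, \<theta>)) \<le> Bc c" by (rule choice)
  then obtain Bc where Bc0: "\<forall>c. \<forall>t\<in>{0..T}. norm (Fd c (t, \<theta>)) \<le> Bc c" by blast
  have Bc: "\<And>c t. t \<in> {0..T} \<Longrightarrow> norm (Fd c (t, \<theta>)) \<le> Bc c" using Bc0 by blast
  define BF where "BF = (\<Sum>c\<in>UNIV. \<bar>Bc c\<bar>)"
  have BF: "\<And>c t. t \<in> {0..T} \<Longrightarrow> norm (Fd c (t, \<theta>)) \<le> BF"
  proof -
    fix c t assume "t \<in> {0..T}"
    then have "norm (Fd c (t, \<theta>)) \<le> \<bar>Bc c\<bar>" using Bc[of t c] by linarith
    also have "\<dots> \<le> BF" unfolding BF_def by (rule member_le_sum) auto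
    finally show "norm (Fd c (t, \<theta>)) \<le> BF" .
  qed
  have BF0: "BF \<ge> 0" unfolding BF_def by (simp add: sum_nonneg)
  obtain P' P'' where P': "\<forall>x>0. (P has_real_derivative P' x) (at x)"
    and P'': "\<forall>x>0. (P' has_real_derivative P'' x) (at x)"
    using A3(1) unfolding C2_pos_def by blast
  define Ymax where "Ymax = (\<Sum>c\<in>UNIV. \<bar>D c 0 \<theta>\<bar>) + L1 * T"
  have "continuous_on {m0..Ymax} P'"
  proof (intro continuous_at_imp_continuous_on ballI)
    fix y assume "y \<in> {m0..Ymax}"
    then have "y > 0" using m0 by auto
    then show "isCont P' y" using P'' DERIV_isCont by blast
  qed
  then have "compact (P' ` {m0..Ymax})" by (intro compact_continuous_image) auto
  then have "bounded (P' ` {m0..Ymax})" by (rule compact_imp_bounded)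
  then obtain BP1 where "\<forall>y\<in>P' ` {m0..Ymax}. norm y \<le> BP1" unfolding bounded_iff by blast
  then obtain BP0 where BP0: "\<forall>y\<in>{m0..Ymax}. \<bar>P' y\<bar> \<le> BP0" by auto
  define BP where "BP = \<bar>BP0\<bar>"
  have BP: "\<And>y. y \<in> {m0..Ymax} \<Longrightarrow> \<bar>P' y\<bar> \<le> BP" using BP0 unfolding BP_def by force
  have BP0': "BP \<ge> 0" unfolding BP_def by simp
  obtain O' O'' where O': "\<forall>x. (Obj has_derivative blinfun_apply (O' x)) (at x)"
    using Obj unfolding twice_diff_def by blast
  define S0 where "S0 = (\<Sum>c\<in>UNIV. \<Sum>ab\<in>part0 c. snd ab - fst ab)"
  define Kg where "Kg = norm (O' \<theta>) + mu * (S0 * (BF * BP))"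
  have S0: "S0 \<ge> 0" unfolding S0_def
  proof (intro sum_nonneg)
    fix c ab assume "ab \<in> part0 c"
    from p0T[rule_format, OF this] show "0 \<le> snd ab - fst ab" by auto
  qed
  have Kg0: "Kg \<ge> 0" unfolding Kg_def using mu S0 BF0 BP0' by simp
  have gradb: "norm (grad (energy Obj mu P D d0 Q) \<theta>) \<le> Kg" if Q: "inv_part part0 Q" for Q
  proof -
    let ?mid = "\<lambda>ab::real\<times>real. (fst ab + snd ab) / 2"
    let ?y = "\<lambda>c ab. D c (?mid ab) \<theta> - d0"
    have Eeq: "energy Obj mu P D d0 Q = (\<lambda>x. Obj x + mu * (\<Sum>c\<in>UNIV. \<Sum>ab\<in>Q c.
        (snd ab - fst ab) * P (D c (?mid ab) x - d0)))"
      by (simp add: energy_def case_prod_beta fun_eq_iff)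
    have yr: "?y c ab \<in> {m0..Ymax}" if ab: "ab \<in> Q c" for c ab
    proof -
      have mm: "m0 \<le> mg c ab" and mid: "?mid ab \<in> {0..T}" and lt: "fst ab < snd ab"
        using marg[rule_format, OF Q ab] by auto
      have "m0 \<le> ?y c ab" using mm psi_nn[of "snd ab - fst ab"] lt unfolding mg_def by auto
      moreover have "\<bar>D c (?mid ab) \<theta> - D c 0 \<theta>\<bar> \<le> L1 * \<bar>?mid ab - 0\<bar>"
        by (rule spec[OF L1, of c, rule_format]) (use mid T in auto)
      moreover have "\<bar>?mid ab - 0\<bar> \<le> T" using mid by auto
      then have "L1 * \<bar>?mid ab - 0\<bar> \<le> L1 * T" using L1p by (rule mult_left_mono)
      moreover have "D c 0 \<theta> \<le> (\<Sum>c\<in>UNIV. \<bar>D c 0 \<theta>\<bar>)"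
      proof -
        have "\<bar>D c 0 \<theta>\<bar> \<le> (\<Sum>c\<in>UNIV. \<bar>D c 0 \<theta>\<bar>)" by (rule member_le_sum) auto
        then show ?thesis by linarith
      qed
      ultimately show ?thesis unfolding Ymax_def atLeastAtMost_iff
        using d0 abs_ge_self[of "D c (?mid ab) \<theta> - D c 0 \<theta>"] by linarith
    qed
    define E' where "E' = (\<lambda>h. O' \<theta> h + mu * (\<Sum>c\<in>UNIV. \<Sum>ab\<in>Q c.
        (snd ab - fst ab) * (Fd c (?mid ab, \<theta>) (0, h) * P' (?y c ab))))"
    have dsum: "((\<lambda>x. (snd ab - fst ab) * P (D c (?mid ab) x - d0)) has_derivative
        (\<lambda>h. (snd ab - fst ab) * (Fd c (?mid ab, \<theta>) (0, h) * P' (?y c ab)))) (at \<theta>)"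
      if ab: "ab \<in> Q c" for c ab
    proof -
      have pd: "((\<lambda>x. (?mid ab, x)) has_derivative (\<lambda>h. (0, h))) (at \<theta>)"
        by (rule has_derivative_Pair[OF has_derivative_const has_derivative_ident, simplified])
      have "((\<lambda>x. (\<lambda>(t, x). D c t x) (?mid ab, x)) has_derivative (\<lambda>h. Fd c (?mid ab, \<theta>) (0, h))) (at \<theta>)"
        by (rule has_derivative_compose[OF pd Fd])
      then have d1: "((\<lambda>x. D c (?mid ab) x - d0) has_derivative (\<lambda>h. Fd c (?mid ab, \<theta>) (0, h))) (at \<theta>)"
        using has_derivative_diff[OF _ has_derivative_const, of _ _ _ d0] by fastforce
      have "?y c ab > 0" using yr[OF ab] m0 by auto
      then have "DERIV P (?y c ab) :> P' (?y c ab)" using P' by blast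
      from DERIV_compose_FDERIV[OF this d1]
      show ?thesis by (rule has_derivative_mult_right)
    qed
    have dE: "(energy Obj mu P D d0 Q has_derivative E') (at \<theta>)"
      unfolding Eeq E'_def
      by (intro has_derivative_add O'[rule_format] has_derivative_mult_right has_derivative_sum dsum)
    have "\<bar>E' h\<bar> \<le> Kg * norm h" for h
    proof -
      have t1: "\<bar>O' \<theta> h\<bar> \<le> norm (O' \<theta>) * norm h" using norm_blinfun[of "O' \<theta>" h] by simp
      have t2: "\<bar>(snd ab - fst ab) * (Fd c (?mid ab, \<theta>) (0, h) * P' (?y c ab))\<bar>
          \<le> (snd ab - fst ab) * (BF * norm h * BP)" if ab: "ab \<in> Q c" for c ab
      proof -
        have lt: "fst ab < snd ab" and mid: "?mid ab \<in> {0..T}" using marg[rule_format, OF Q ab] by auto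
        have "\<bar>Fd c (?mid ab, \<theta>) (0, h)\<bar> \<le> norm (Fd c (?mid ab, \<theta>)) * norm (0::real, h)"
          using norm_blinfun[of "Fd c (?mid ab, \<theta>)" "(0, h)"] by simp
        also have "\<dots> \<le> BF * norm h" using BF[OF mid, of c] by (simp add: norm_Pair mult_right_mono)
        finally have a1: "\<bar>Fd c (?mid ab, \<theta>) (0, h)\<bar> \<le> BF * norm h" .
        have a2: "\<bar>P' (?y c ab)\<bar> \<le> BP" using BP yr[OF ab] by blast
        have "\<bar>Fd c (?mid ab, \<theta>) (0, h) * P' (?y c ab)\<bar> \<le> BF * norm h * BP"
          unfolding abs_mult using a1 a2 by (intro mult_mono) auto
        moreover have "\<bar>snd ab - fst ab\<bar> = snd ab - fst ab" using lt by simp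
        ultimately show ?thesis using lt unfolding abs_mult by (simp add: mult_left_mono)
      qed
      have "\<bar>\<Sum>c\<in>UNIV. \<Sum>ab\<in>Q c. (snd ab - fst ab) * (Fd c (?mid ab, \<theta>) (0, h) * P' (?y c ab))\<bar>
          \<le> (\<Sum>c\<in>UNIV. \<Sum>ab\<in>Q c. \<bar>(snd ab - fst ab) * (Fd c (?mid ab, \<theta>) (0, h) * P' (?y c ab))\<bar>)"
        by (rule order_trans[OF sum_abs sum_mono[OF sum_abs]])
      also have "\<dots> \<le> (\<Sum>c\<in>UNIV. \<Sum>ab\<in>Q c. (snd ab - fst ab) * (BF * norm h * BP))"
        using t2 by (intro sum_mono) auto
      also have "\<dots> = (\<Sum>c\<in>UNIV. (\<Sum>ab\<in>Q c. snd ab - fst ab) * (BF * norm h * BP))"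
        by (simp add: sum_distrib_right)
      also have "\<dots> \<le> (\<Sum>c\<in>UNIV. (\<Sum>ab\<in>part0 c. snd ab - fst ab) * (BF * norm h * BP))"
        using Q BF0 BP0' unfolding inv_part_def by (intro sum_mono mult_right_mono) auto
      also have "\<dots> = S0 * (BF * norm h * BP)" unfolding S0_def by (simp add: sum_distrib_right)
      finally have t3: "\<bar>\<Sum>c\<in>UNIV. \<Sum>ab\<in>Q c. (snd ab - fst ab) * (Fd c (?mid ab, \<theta>) (0, h) * P' (?y c ab))\<bar>
          \<le> S0 * (BF * norm h * BP)" .
      have "\<bar>E' h\<bar> \<le> \<bar>O' \<theta> h\<bar> + mu * \<bar>\<Sum>c\<in>UNIV. \<Sum>ab\<in>Q c. (snd ab - fst ab) * (Fd c (?mid ab, \<theta>) (0, h) * P' (?y c ab))\<bar>"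
        unfolding E'_def using mu by (intro order_trans[OF abs_triangle_ineq]) (simp add: abs_mult)
      also have "\<dots> \<le> norm (O' \<theta>) * norm h + mu * (S0 * (BF * norm h * BP))"
        using t1 t3 mu by (intro add_mono mult_left_mono) auto
      also have "\<dots> = Kg * norm h" unfolding Kg_def by (simp add: algebra_simps)
      finally show ?thesis .
    qed
    then show ?thesis using grad_bound[OF dE _ Kg0] by blast
  qed
  define K where "K = Kg + Kg / \<beta>l"
  have Kb: "norm (direction newton M (energy Obj mu P D d0 Q) \<theta>) \<le> K" if Q: "inv_part part0 Q" for Q
  proof -
    let ?g = "grad (energy Obj mu P D d0 Q) \<theta>"
    have g: "norm ?g \<le> Kg" using gradb[OF Q] .
    have "norm (matrix_inv (M (hess (energy Obj mu P D d0 Q) \<theta>)) *v (- ?g)) \<le> norm (- ?g) / \<beta>l"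
      using M(2) \<beta>(1) by (intro inv_bound) auto
    also have "\<dots> \<le> Kg / \<beta>l" using g \<beta>(1) by (simp add: divide_right_mono)
    finally have n: "norm (matrix_inv (M (hess (energy Obj mu P D d0 Q) \<theta>)) *v (- ?g)) \<le> Kg / \<beta>l" .
    have "Kg / \<beta>l \<ge> 0" using Kg0 \<beta>(1) by simp
    then show ?thesis unfolding direction_def K_def using n g Kg0 by auto
  qed
  define prt where "prt = (\<lambda>n. fst (s n))"
  define al where "al = (\<lambda>n. fst (snd (s n)))"
  define ea where "ea = (\<lambda>n. fst (snd (snd (s n))))"
  define dd where "dd = (\<lambda>n. snd (snd (snd (s n))))"
  have stp: "(sub n \<and> al n \<le> ea n \<and> (\<exists>c ab. unsafe_tuple \<psi> D d0 (prt n) (\<theta> + al n *\<^sub>R dd n) c ab \<and>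
        prt (Suc n) = subdivide (prt n) c ab) \<and> ea (Suc n) = \<gamma> * ea n \<and> al (Suc n) = al n \<and>
        dd (Suc n) = direction newton M (energy Obj mu P D d0 (prt (Suc n))) \<theta>)
    \<or> (\<not> sub n \<and> prt (Suc n) = prt n \<and> al (Suc n) = \<gamma> * al n \<and> ea (Suc n) = ea n \<and> dd (Suc n) = dd n)"
    for n
  proof -
    have L: "ls_step Obj mu P D d0 \<psi> \<gamma> cW newton M \<theta> (s n) (sub n) (s (Suc n))"
      using run by blast
    have L': "(\<exists>c ab. unsafe_tuple \<psi> D d0 (prt n) (\<theta> + al n *\<^sub>R dd n) c ab \<and>
       (if al n \<le> ea n then sub n \<and> prt (Suc n) = subdivide (prt n) c ab \<and> ea (Suc n) = \<gamma> * ea n \<and>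
          al (Suc n) = al n \<and> dd (Suc n) = direction newton M (energy Obj mu P D d0 (prt (Suc n))) \<theta>
        else \<not> sub n \<and> prt (Suc n) = prt n \<and> al (Suc n) = \<gamma> * al n \<and> ea (Suc n) = ea n \<and> dd (Suc n) = dd n))
      \<or> (\<not> sub n \<and> prt (Suc n) = prt n \<and> al (Suc n) = \<gamma> * al n \<and> ea (Suc n) = ea n \<and> dd (Suc n) = dd n)"
      using L unfolding ls_step_def Let_def prt_def al_def ea_def dd_def by blast
    show ?thesis
    proof (cases "al n \<le> ea n")
      case True
      then show ?thesis using L' by (simp only: if_True) blast
    next
      case False
      then show ?thesis using L' by (simp only: if_False) blast
    qed
  qed
  define K' where "K' = max K (norm d_in)"
  have K'0: "K' \<ge> 0" unfolding K'_def by (simp add: le_max_iff_disj)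
  have inv: "inv_part part0 (prt n) \<and> al n > 0 \<and> ea n > 0 \<and> norm (dd n) \<le> K'" for n
  proof (induction n)
    case 0
    have e: "prt 0 = part0" "al 0 = \<alpha>0" "ea 0 = e\<alpha>0" "dd 0 = d_in"
      unfolding prt_def al_def ea_def dd_def by (simp_all add: run0)
    have "norm d_in \<le> K'" unfolding K'_def by simp
    then show ?case using e inv_part_init[OF part0] \<alpha>0 e\<alpha>0 by simp
  next
    case (Suc n)
    have IH: "inv_part part0 (prt n)" "al n > 0" "ea n > 0" "norm (dd n) \<le> K'" using Suc.IH by blast+
    from stp[of n] show ?case
    proof (elim disjE conjE)
      assume A1: "al (Suc n) = al n" and A2: "ea (Suc n) = \<gamma> * ea n"
        and A3: "dd (Suc n) = direction newton M (energy Obj mu P D d0 (prt (Suc n))) \<theta>"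
        and A4: "\<exists>c ab. unsafe_tuple \<psi> D d0 (prt n) (\<theta> + al n *\<^sub>R dd n) c ab \<and>
        prt (Suc n) = subdivide (prt n) c ab"
      then obtain c ab where u: "unsafe_tuple \<psi> D d0 (prt n) (\<theta> + al n *\<^sub>R dd n) c ab"
        and pe: "prt (Suc n) = subdivide (prt n) c ab" by blast
      have "ab \<in> prt n c" using u unfolding unsafe_tuple_def by blast
      then have I: "inv_part part0 (prt (Suc n))" unfolding pe by (rule inv_part_sub[OF IH(1)])
      have "norm (dd (Suc n)) \<le> K" unfolding A3 by (rule Kb[OF I])
      then have nd: "norm (dd (Suc n)) \<le> K'" unfolding K'_def by simp
      have a1: "al (Suc n) > 0" using A1 IH(2) by simp
      have e1: "ea (Suc n) > 0" using A2 IH(3) \<gamma>(1) by simp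
      show ?thesis using I a1 e1 nd by blast
    next
      assume A1: "prt (Suc n) = prt n" and A2: "al (Suc n) = \<gamma> * al n" and A3: "ea (Suc n) = ea n"
        and A4: "dd (Suc n) = dd n"
      have a1: "al (Suc n) > 0" using A2 IH(2) \<gamma>(1) by simp
      show ?thesis using IH A1 A3 A4 a1 by simp
    qed
  qed
  have eadec: "ea (Suc n) \<le> ea n" for n
    using stp[of n] inv[of n] \<gamma> by (auto simp: mult_le_cancel_right1)
  have eamono: "n \<le> m \<Longrightarrow> ea m \<le> ea n" for n m
    by (rule lift_Suc_antimono_le[of ea, OF eadec])
  have frq: "\<forall>n. \<exists>m>n. sub m" using inf_sub unfolding INFM_nat by blast
  have eaj: "\<exists>n. ea n \<le> e\<alpha>0 * \<gamma> ^ j" for j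
  proof (induction j)
    case 0
    have "ea 0 = e\<alpha>0" unfolding ea_def using run0 by simp
    then show ?case by auto
  next
    case (Suc j)
    then obtain n where n: "ea n \<le> e\<alpha>0 * \<gamma> ^ j" by blast
    obtain m where m: "m > n" "sub m" using frq by blast
    have "ea (Suc m) = \<gamma> * ea m" using stp[of m] m(2) by auto
    also have "\<dots> \<le> \<gamma> * ea n" using eamono[of n m] m(1) \<gamma> by simp
    also have "\<dots> \<le> \<gamma> * (e\<alpha>0 * \<gamma> ^ j)" using n \<gamma> by simp
    finally show ?case by (auto simp: algebra_simps)
  qed
  have "0 < \<rho> / ((K' + 1) * e\<alpha>0)" using \<rho> K'0 e\<alpha>0 by simp
  then obtain j where j: "\<gamma> ^ j < \<rho> / ((K' + 1) * e\<alpha>0)" using real_arch_pow_inv \<gamma>(2) by blast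
  obtain n where n: "ea n \<le> e\<alpha>0 * \<gamma> ^ j" using eaj by blast
  have pos: "(K' + 1) * e\<alpha>0 > 0" using K'0 e\<alpha>0 by simp
  have jj: "\<gamma> ^ j * ((K' + 1) * e\<alpha>0) < \<rho>" using j by (subst (asm) pos_less_divide_eq[OF pos])
  have "ea n * (K' + 1) \<le> e\<alpha>0 * \<gamma> ^ j * (K' + 1)" using n K'0 by (intro mult_right_mono) auto
  also have "\<dots> = \<gamma> ^ j * ((K' + 1) * e\<alpha>0)" by (simp add: algebra_simps)
  finally have ean: "ea n * (K' + 1) < \<rho>" using jj by linarith
  obtain m where m: "m > n" "sub m" using frq by blast
  from stp[of m] m(2) have A: "al m \<le> ea m"
    and "\<exists>c ab. unsafe_tuple \<psi> D d0 (prt m) (\<theta> + al m *\<^sub>R dd m) c ab" by auto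
  then obtain c ab where u: "unsafe_tuple \<psi> D d0 (prt m) (\<theta> + al m *\<^sub>R dd m) c ab" by blast
  have "dist (\<theta> + al m *\<^sub>R dd m) \<theta> = al m * norm (dd m)"
    using inv[of m] by (simp add: dist_norm)
  also have "\<dots> \<le> ea n * K'"
    using inv[of m] A eamono[of n m] m(1) K'0 by (intro mult_mono) auto
  also have "\<dots> \<le> ea n * (K' + 1)" using inv[of n] by simp
  also have "\<dots> < \<rho>" by (rule ean)
  finally have "dist (\<theta> + al m *\<^sub>R dd m) \<theta> < \<rho>" .
  then show False using nounsafe inv[of m] u by blast
qed

end
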